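(* Fix $Z>0$, integers $n\ge1$, $0\le l\le n-1$, and real $q>0$, $q\ne1$. Then, as $D\to\infty$ through integers, $$R_q[\rho_{n,l}]=2D\log D+D\log\!\Big[\frac{q^{\frac{1}{q-1}}}{4Ze}\Big]+\frac{q(n-l-\frac12)-\frac12}{1-q}\log D+\frac{1}{1-q}\log\mathcal F(n,l,q)+o(1),$$ where $$\mathcal F(n,l,q)=\frac{(2\pi)^{\frac{1-q}{2}}\,|q-1|^{2(n-l-1)q}}{\Gamma(n-l)^q}\,\frac{e^{(2n-3)(1-q)}}{q^{2q(n-1)}}.$$
   Context: $D$-dimensional hydrogenic atom with nuclear charge $Z>0$ (atomic units). For integers $D\ge2$, $n\ge1$, $0\le l\le n-1$ set $\eta=n+\frac{D-3}{2}$, $L=l+\frac{D-3}{2}$ (so $2L+1=2l+D-2$), $\lambda=\eta/(2Z)$ and $\tilde r=r/\lambda$. The radial position density is $$\rho_{n,l}(r)=\frac{\lambda^{-D}}{2\eta}\,\tilde r^{\,2L+1-(D-2)}e^{-\tilde r}\,\big[\widehat{\mathcal L}^{(2L+1)}_{n-l-1}(\tilde r)\big]^2,$$ which satisfies $\int_0^\infty\rho_{n,l}(r)r^{D-1}dr=1$; here $\widehat{\mathcal L}^{(\alpha)}_k(x)=\big(k!/\Gamma(k+\alpha+1)\big)^{1/2}\mathcal L^{(\alpha)}_k(x)$ is the orthonormal generalized Laguerre polynomial. The radial Rényi entropy is $$R_q[\rho_{n,l}]=\frac{1}{1-q}\log\int_0^\infty[\rho_{n,l}(r)]^q\,r^{D-1}\,dr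 .$$ $|q-1|^0:=1$. *)

theory Defs
  imports "HOL-Analysis.Analysis"
begin

definition laguerre :: "nat \<Rightarrow> real \<Rightarrow> real \<Rightarrow> real" where
  "laguerre k \<alpha> x = (\<Sum>i\<le>k. (-1)^i * Gamma (real k + \<alpha> + 1)
      / (Gamma (real i + \<alpha> + 1) * fact (k - i) * fact i) * x ^ i)"

definition laguerre_on :: "nat \<Rightarrow> real \<Rightarrow> real \<Rightarrow> real" where
  "laguerre_on k \<alpha> x = sqrt (fact k / Gamma (real k + \<alpha> + 1)) * laguerre k \<alpha> x"

definition hyd_eta :: "nat \<Rightarrow> nat \<Rightarrow> real" where
  "hyd_eta D n = real n + (real D - 3) / 2"

definition hyd_L :: "nat \<Rightarrow> nat \<Rightarrow> real" where
  "hyd_L D l = real l + (real D - 3) / 2"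

definition hyd_lambda :: "real \<Rightarrow> nat \<Rightarrow> nat \<Rightarrow> real" where
  "hyd_lambda Z D n = hyd_eta D n / (2 * Z)"

text \<open>Radial position density rho_{n,l}(r) of the D-dimensional hydrogenic atom (for r > 0).\<close>
definition hyd_rho :: "real \<Rightarrow> nat \<Rightarrow> nat \<Rightarrow> nat \<Rightarrow> real \<Rightarrow> real" where
  "hyd_rho Z D n l r =
     (let lam = hyd_lambda Z D n; \<eta> = hyd_eta D n; L = hyd_L D l; rt = r / lam in
      lam powr (- real D) / (2 * \<eta>) * rt powr (2 * L + 1 - (real D - 2)) * exp (- rt)
        * (laguerre_on (n - l - 1) (2 * L + 1) rt)\<^sup>2)"

definition renyi_rad :: "real \<Rightarrow> nat \<Rightarrow> nat \<Rightarrow> nat \<Rightarrow> real \<Rightarrow> real" where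
  "renyi_rad Z D n l q =
     1 / (1 - q) * ln (LBINT r:{0<..}. (hyd_rho Z D n l r) powr q * r ^ (D - 1))"

definition calF :: "nat \<Rightarrow> nat \<Rightarrow> real \<Rightarrow> real" where
  "calF n l q = (2 * pi) powr ((1 - q) / 2) * \<bar>q - 1\<bar> powr (2 * real (n - l - 1) * q)
      / Gamma (real (n - l)) powr q
      * exp ((2 * real n - 3) * (1 - q)) / q powr (2 * q * (real n - 1))"

end

theory Submission
  imports Defs "HOL-Real_Asymp.Real_Asymp" "HOL-Computational_Algebra.Polynomial"
begin

lemma gamma_lint:
  fixes s :: real assumes "s > 0"
  shows "set_integrable lborel {0<..} (\<lambda>t. t powr (s-1) * exp (-t))"
    and "(LBINT t:{0<..}. t powr (s-1) * exp (-t)) = Gamma s"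
proof -
  have eq: "(\<lambda>t. indicator {0<..} t *\<^sub>R (t powr (s-1) * exp (-t))) = (\<lambda>t::real. indicator {0..} t * t powr (s - 1) / exp t)"
  proof (rule ext)
    fix t :: real show "indicator {0<..} t *\<^sub>R (t powr (s-1) * exp (-t)) = indicator {0..} t * t powr (s - 1) / exp t"
      by (cases "t = 0") (auto simp: indicator_def exp_minus field_simps)
  qed
  have nn: "(\<integral>\<^sup>+x. ennreal (indicator {0..} x * x powr (s - 1) / exp x) \<partial>lborel) = ennreal (Gamma s)"
    using Gamma_conv_nn_integral_real[OF assms] by simp
  have "integrable lborel (\<lambda>t::real. indicator {0..} t * t powr (s - 1) / exp t) \<and>
        lebesgue_integral lborel (\<lambda>t::real. indicator {0..} t * t powr (s - 1) / exp t) = Gamma s"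
    using nn assms by (subst nn_integral_eq_integrable[symmetric]) (auto simp: indicator_def intro!: Gamma_real_nonneg)
  then show "set_integrable lborel {0<..} (\<lambda>t. t powr (s-1) * exp (-t))"
    "(LBINT t:{0<..}. t powr (s-1) * exp (-t)) = Gamma s"
    unfolding set_integrable_def set_lebesgue_integral_def eq by auto
qed

definition wfun :: "real \<Rightarrow> real \<Rightarrow> real" where
  "wfun m s = (if s > 0 then s powr m * exp (-s) else 0)"

lemma wfun_nonneg: "wfun m s \<ge> 0" by (simp add: wfun_def)

lemma wfun_meas [measurable]: "wfun m \<in> borel_measurable borel"
  unfolding wfun_def by measurable

lemma wfun_mom:
  assumes "m > -1"
  shows "integrable lborel (\<lambda>s. wfun m s * s^j)" "lebesgue_integral lborel (\<lambda>s. wfun m s * s^j) = Gamma (m + real j + 1)"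
proof -
  have pos: "m + real j + 1 > 0" using assms by simp
  have eq: "(\<lambda>s. wfun m s * s^j) = (\<lambda>t. indicator {0<..} t *\<^sub>R (t powr ((m + real j + 1)-1) * exp (-t)))"
  proof (rule ext)
    fix t :: real
    show "wfun m t * t^j = indicator {0<..} t *\<^sub>R (t powr ((m + real j + 1)-1) * exp (-t))"
      by (cases "t > 0") (auto simp: wfun_def indicator_def powr_add powr_realpow)
  qed
  show "integrable lborel (\<lambda>s. wfun m s * s^j)"
    using gamma_lint(1)[OF pos] unfolding eq set_integrable_def .
  show "lebesgue_integral lborel (\<lambda>s. wfun m s * s^j) = Gamma (m + real j + 1)"
    using gamma_lint(2)[OF pos] unfolding eq set_lebesgue_integral_def .
qed

lemma wfun_poly:
  fixes p :: "real poly"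
  assumes "m > -1"
  shows "integrable lborel (\<lambda>s. wfun m s * poly p (c * s))"
        "lebesgue_integral lborel (\<lambda>s. wfun m s * poly p (c * s)) = (\<Sum>i\<le>degree p. coeff p i * c^i * Gamma (m + real i + 1))"
proof -
  have eq: "(\<lambda>s. wfun m s * poly p (c * s)) = (\<lambda>s. \<Sum>i\<le>degree p. (coeff p i * c^i) * (wfun m s * s^i))"
    by (rule ext) (simp add: poly_altdef sum_distrib_left power_mult_distrib mult_ac)
  show "integrable lborel (\<lambda>s. wfun m s * poly p (c * s))"
    unfolding eq by (intro Bochner_Integration.integrable_sum Bochner_Integration.integrable_mult_right wfun_mom(1)[OF assms])
  show "lebesgue_integral lborel (\<lambda>s. wfun m s * poly p (c * s)) = (\<Sum>i\<le>degree p. coeff p i * c^i * Gamma (m + real i + 1))"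
    unfolding eq using wfun_mom[OF assms] by (subst Bochner_Integration.integral_sum) auto
qed

lemma ln_lower_aux:
  fixes x :: real assumes "x \<ge> 0" shows "2*x/(2+x) \<le> ln (1+x)"
proof -
  let ?f = "\<lambda>t::real. ln (1+t) - 2*t/(2+t)"
  have "?f 0 \<le> ?f x"
  proof (rule DERIV_nonneg_imp_nondecreasing[OF assms])
    fix t :: real assume t: "0 \<le> t" "t \<le> x"
    have "(?f has_real_derivative (1/(1+t) - (2*(2+t) - 2*t)/(2+t)^2)) (at t)"
      using t by (auto intro!: derivative_eq_intros simp: power2_eq_square)
    moreover have "1/(1+t) - (2*(2+t) - 2*t)/(2+t)^2 = t^2/((1+t)*(2+t)^2)"
      using t by (simp add: divide_simps power2_eq_square) algebra
    moreover have "t^2/((1+t)*(2+t)^2) \<ge> 0" using t by simp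
    ultimately show "\<exists>y. (?f has_real_derivative y) (at t) \<and> 0 \<le> y" by metis
  qed
  then show ?thesis by simp
qed

lemma ln_upper_aux:
  fixes x :: real assumes "x \<ge> 0" shows "ln (1+x) \<le> x - x^2/2 + x^3/3"
proof -
  let ?f = "\<lambda>t::real. t - t^2/2 + t^3/3 - ln (1+t)"
  have "?f 0 \<le> ?f x"
  proof (rule DERIV_nonneg_imp_nondecreasing[OF assms])
    fix t :: real assume t: "0 \<le> t" "t \<le> x"
    have "(?f has_real_derivative (1 - t + t^2 - 1/(1+t))) (at t)"
      using t by (auto intro!: derivative_eq_intros simp: power2_eq_square field_simps)
    moreover have "1 - t + t^2 - 1/(1+t) = t^3/(1+t)"
      using t by (simp add: field_simps power2_eq_square power3_eq_cube)
    moreover have "t^3/(1+t) \<ge> 0" using t by simp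
    ultimately show "\<exists>y. (?f has_real_derivative y) (at t) \<and> 0 \<le> y" by metis
  qed
  then show ?thesis by simp
qed

lemma wal_step: fixes P F a :: real assumes "P > 0" "F > 0" "a \<ge> 0"
  shows "P/(F^2*(2*a+1)) * (4*(a+1)^2/(4*(a+1)^2 - 1)) = 16*(a+1)^4*P/(((2*a+2)*(2*a+1)*F)^2*(2*(a+1)+1))"
proof -
  have e2: "4*(a+1)^2 - 1 = (2*a+1)*(2*a+3)" by (simp add: algebra_simps power2_eq_square)
  show ?thesis unfolding e2 using assms by (simp add: divide_simps) algebra
qed

definition stir_a :: "nat \<Rightarrow> real" where
  "stir_a N = ln (fact N) - ((real N + 1/2) * ln (real N) - real N)"

lemma stir_a_diff:
  assumes "N \<ge> 1"
  shows "stir_a N - stir_a (Suc N) = (real N + 1/2) * ln (1 + 1/real N) - 1"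
proof -
  have h1: "ln (fact (Suc N) :: real) = ln (real N + 1) + ln (fact N)"
    by (simp add: ln_mult add.commute)
  have h2: "ln (1 + 1/real N) = ln (real N + 1) - ln (real N)"
  proof -
    have "1 + 1/real N = (real N + 1)/ real N" using assms by (simp add: field_simps)
    thus ?thesis using assms by (simp add: ln_div)
  qed
  show ?thesis unfolding stir_a_def h1 h2 by (simp add: algebra_simps)
qed

lemma stir_diff_bounds:
  assumes "N \<ge> 1"
  shows "0 \<le> stir_a N - stir_a (Suc N)" "stir_a N - stir_a (Suc N) \<le> 1/(4*real N^2)"
proof -
  define x where "x = 1/real N"
  have x: "x > 0" "x \<le> 1" using assms by (auto simp: x_def)
  have NN: "real N + 1/2 = (2 + x)/(2*x)"
  proof -
    have "(2+x)/(2*x) = 1/x + 1/2" using x(1) by (simp add: field_simps)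
    thus ?thesis using assms by (simp add: x_def)
  qed
  have "(real N + 1/2) * ln (1 + x) \<ge> (real N + 1/2) * (2*x/(2+x))"
    using ln_lower_aux[of x] x by (intro mult_left_mono) auto
  also have "(real N + 1/2) * (2*x/(2+x)) = 1" unfolding NN using x(1) by (simp add: divide_simps)
  finally show "0 \<le> stir_a N - stir_a (Suc N)" using stir_a_diff[OF assms] by (simp add: x_def)
  have "(real N + 1/2) * ln (1 + x) \<le> (real N + 1/2) * (x - x^2/2 + x^3/3)"
    using ln_upper_aux[of x] x by (intro mult_left_mono) auto
  also have "(real N + 1/2) * (x - x^2/2 + x^3/3) = 1 + x^2/12 + x^3/6"
    unfolding NN using x(1) by (simp add: divide_simps power2_eq_square power3_eq_cube) algebra
  also have "x^3 \<le> x^2" using x by (simp add: power_decreasing)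
  hence "1 + x^2/12 + x^3/6 \<le> 1 + x^2/4" by simp
  finally have "(real N + 1/2) * ln (1 + x) - 1 \<le> x^2/4" by simp
  moreover have "x^2/4 = 1/(4*real N^2)" by (simp add: x_def power2_eq_square)
  ultimately show "stir_a N - stir_a (Suc N) \<le> 1/(4*real N^2)"
    using stir_a_diff[OF assms] by (simp add: x_def)
qed

lemma stir_conv: "\<exists>C. (\<lambda>N. stir_a N) \<longlonglongrightarrow> C"
proof -
  define c where "c i = stir_a (Suc i)" for i
  define b where "b i = stir_a (Suc i) - 1/(2*real (Suc i))" for i
  have dec: "decseq c" unfolding c_def
    by (rule decseq_SucI) (use stir_diff_bounds(1) in force)
  have inc: "incseq b"
  proof (rule incseq_SucI)
    fix i
    have N: "Suc i \<ge> 1" by simp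
    have "stir_a (Suc i) - stir_a (Suc (Suc i)) \<le> 1/(4*real (Suc i)^2)"
      using stir_diff_bounds(2)[OF N] .
    moreover have "1/(4*real (Suc i)^2) \<le> 1/(2*real (Suc i)) - 1/(2*real (Suc (Suc i)))"
      by (simp add: divide_simps power2_eq_square) (simp add: algebra_simps)
    ultimately show "b i \<le> b (Suc i)" unfolding b_def by simp
  qed
  have "\<forall>i. b 0 \<le> c i"
  proof
    fix i have "b 0 \<le> b i" using inc by (simp add: incseq_def)
    also have "b i \<le> c i" by (simp add: b_def c_def)
    finally show "b 0 \<le> c i" .
  qed
  then obtain L where "c \<longlonglongrightarrow> L" using decseq_convergent[OF dec] by blast
  hence "(\<lambda>N. stir_a N) \<longlonglongrightarrow> L" unfolding c_def by (rule LIMSEQ_imp_Suc)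
  thus ?thesis by blast
qed

lemma wallis_closed:
  "(\<Prod>k=1..n. (4*real k^2) / (4*real k^2 - 1)) =
     (2^n * fact n)^4 / ((fact (2*n))^2 * (2*real n + 1))"
proof (induction n)
  case 0 then show ?case by simp
next
  case (Suc n)
  have f: "(fact (2 * Suc n) :: real) = (2*real n + 2) * (2*real n + 1) * fact (2*n)"
    by (simp add: algebra_simps)
  have "(\<Prod>k=1..Suc n. (4*real k^2) / (4*real k^2 - 1)) =
        (2^n * fact n)^4 / ((fact (2*n))^2 * (2*real n + 1)) * ((4*(real n+1)^2) / (4*(real n+1)^2 - 1))"
    using Suc by (simp add: algebra_simps)
  also have "\<dots> = 16*(real n+1)^4*(2^n * fact n)^4/(((2*real n+2)*(2*real n+1)*fact (2*n))^2*(2*(real n+1)+1))"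
    by (rule wal_step) auto
  also have "\<dots> = (2^Suc n * fact (Suc n))^4 / ((fact (2*Suc n))^2 * (2*real (Suc n) + 1))"
  proof -
    have g1: "(2^Suc n * fact (Suc n) :: real) = 2*(real n+1)*(2^n*fact n)" by (simp add: algebra_simps)
    have g2: "(2*(real n+1)*(2^n*fact n))^4 = 16*(real n+1)^4*(2^n*fact n :: real)^4" by (simp only: power_mult_distrib) simp
    have g3: "(2 * real n + 2) ^ 4 = 16 * (real n + 1) ^ 4" 
    proof - have e: "2*real n+2 = 2*(real n+1)" by simp
      show ?thesis unfolding e by (simp only: power_mult_distrib) simp qed
    show ?thesis unfolding f g1 g2 of_nat_Suc by (simp add: g3)
  qed
  finally show ?case .
qed

lemma stirling_ln_fact:
  "(\<lambda>N. ln (fact N) - ((real N + 1/2) * ln (real N) - real N)) \<longlonglongrightarrow> ln (2*pi)/2"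
proof -
  obtain C where C: "(\<lambda>N. stir_a N) \<longlonglongrightarrow> C" using stir_conv by blast
  have C2: "(\<lambda>N. stir_a (2*N)) \<longlonglongrightarrow> C"
    using LIMSEQ_subseq_LIMSEQ[OF C, of "\<lambda>N. 2*N"] by (simp add: strict_mono_def o_def)
  define W where "W n = (\<Prod>k=1..n. (4*real k^2) / (4*real k^2 - 1))" for n
  have W: "W \<longlonglongrightarrow> pi/2" unfolding W_def by (rule wallis)
  have lnW: "(\<lambda>n. ln (W n)) \<longlonglongrightarrow> ln (pi/2)"
    using tendsto_ln[OF W] pi_gt_zero by simp
  have eq: "ln (W n) = 4 * stir_a n - 2 * stir_a (2*n) + (ln (real n) - ln 2 - ln (2*real n + 1))"
    if "n \<ge> 1" for n
  proof -
    have pos: "(fact n :: real) > 0" "(fact (2*n) :: real) > 0" "2*real n+1 > 0" by auto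
    have "ln (W n) = 4 * (real n * ln 2 + ln (fact n)) - (2 * ln (fact (2*n)) + ln (2*real n+1))"
      unfolding W_def wallis_closed using pos
      by (simp add: ln_div ln_mult ln_realpow power_mult_distrib)
    moreover have "ln (2 * real n) = ln 2 + ln (real n)" using that by (simp add: ln_mult)
    ultimately show ?thesis using that unfolding stir_a_def by (simp add: algebra_simps)
  qed
  have lim3: "(\<lambda>n. ln (real n) - ln 2 - ln (2*real n + 1)) \<longlonglongrightarrow> - 2 * ln 2"
    by real_asymp
  have "(\<lambda>n. 4 * stir_a n - 2 * stir_a (2*n) + (ln (real n) - ln 2 - ln (2*real n + 1)))
          \<longlonglongrightarrow> 4*C - 2*C + (-2 * ln 2)"
    by (intro tendsto_intros C C2 lim3)
  moreover have "eventually (\<lambda>n. 4 * stir_a n - 2 * stir_a (2*n) + (ln (real n) - ln 2 - ln (2*real n + 1)) = ln (W n)) sequentially"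
    using eventually_ge_at_top[of 1] by eventually_elim (simp add: eq)
  ultimately have "(\<lambda>n. ln (W n)) \<longlonglongrightarrow> 4*C - 2*C + (-2 * ln 2)"
    by (rule Lim_transform_eventually)
  with lnW have "ln (pi/2) = 4*C - 2*C + (-2 * ln 2)" using LIMSEQ_unique by blast
  hence "C * 2 = ln (2*pi)" using pi_gt_zero by (simp add: ln_div ln_mult field_simps)
  hence Cv: "C = ln (2*pi)/2" by simp
  show ?thesis using C unfolding stir_a_def Cv by assumption
qed

lemma gamma_ratio_pos:
  fixes z :: real assumes z: "z > 0"
  shows "(\<lambda>D::nat. ln (Gamma (real D + z)) - ln (Gamma (real D)) - z * ln (real D)) \<longlonglongrightarrow> 0"
proof -
  have zn: "z \<notin> \<int>\<^sub>\<le>\<^sub>0" using z by (auto elim!: nonpos_Ints_cases)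
  have Gz: "Gamma z > 0" using z by (rule Gamma_real_pos)
  have L1: "(\<lambda>n. Gamma_series z n / Gamma z) \<longlonglongrightarrow> 1"
    using tendsto_divide[OF Gamma_series_LIMSEQ[of z] tendsto_const[of "Gamma z"]] Gz by simp
  have L2: "(\<lambda>n. ln (Gamma_series z n / Gamma z)) \<longlonglongrightarrow> 0"
    using tendsto_ln[OF L1] by simp
  have L3: "(\<lambda>n::nat. z * (ln (real n + 1) - ln (real n))) \<longlonglongrightarrow> 0"
    by real_asymp
  have eq: "ln (Gamma (real (Suc n) + z)) - ln (Gamma (real (Suc n))) - z * ln (real (Suc n))
        = - ln (Gamma_series z n / Gamma z) - z * (ln (real n + 1) - ln (real n))" if n: "n > 0" for n
  proof -
    have p: "pochhammer z (n+1) = Gamma (z + real (n+1)) / Gamma z"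
      using pochhammer_Gamma[OF zn] by simp
    have G1: "Gamma (z + real (n+1)) > 0" using z by (intro Gamma_real_pos) simp
    have "Gamma_series z n / Gamma z = fact n * exp (z * ln (real n)) / Gamma (z + real (n+1))"
      unfolding Gamma_series_def p using Gz G1 by (simp add: field_simps)
    hence "ln (Gamma_series z n / Gamma z) = ln (fact n) + z * ln (real n) - ln (Gamma (z + real (n+1)))"
      using G1 by (simp add: ln_div ln_mult)
    moreover have "Gamma (real (Suc n)) = fact n" using Gamma_fact[of n] by simp
    ultimately show ?thesis by (simp add: algebra_simps)
  qed
  have A: "(\<lambda>n. - ln (Gamma_series z n / Gamma z) - z * (ln (real n + 1) - ln (real n))) \<longlonglongrightarrow> 0"
    using tendsto_diff[OF tendsto_minus[OF L2] L3] by simp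
  have ev: "eventually (\<lambda>n. - ln (Gamma_series z n / Gamma z) - z * (ln (real n + 1) - ln (real n)) =
     ln (Gamma (real (Suc n) + z)) - ln (Gamma (real (Suc n))) - z * ln (real (Suc n))) sequentially"
    using eventually_gt_at_top[of "0::nat"] by eventually_elim (simp only: eq)
  have "(\<lambda>n. ln (Gamma (real (Suc n) + z)) - ln (Gamma (real (Suc n))) - z * ln (real (Suc n))) \<longlonglongrightarrow> 0"
    by (rule Lim_transform_eventually[OF A ev])
  thus ?thesis by (rule LIMSEQ_imp_Suc)
qed

lemma gamma_ratio_step:
  fixes a :: real
  assumes "(\<lambda>D::nat. ln (Gamma (real D + (a+1))) - ln (Gamma (real D)) - (a+1) * ln (real D)) \<longlonglongrightarrow> 0"
  shows "(\<lambda>D::nat. ln (Gamma (real D + a)) - ln (Gamma (real D)) - a * ln (real D)) \<longlonglongrightarrow> 0"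
proof -
  have L: "(\<lambda>D::nat. ln (real D + a) - ln (real D)) \<longlonglongrightarrow> 0" by real_asymp
  have "(\<lambda>D. (ln (Gamma (real D + (a+1))) - ln (Gamma (real D)) - (a+1) * ln (real D)) - (ln (real D + a) - ln (real D))) \<longlonglongrightarrow> 0 - 0"
    by (intro tendsto_intros assms L)
  moreover have "eventually (\<lambda>D. (ln (Gamma (real D + (a+1))) - ln (Gamma (real D)) - (a+1) * ln (real D)) - (ln (real D + a) - ln (real D))
     = ln (Gamma (real D + a)) - ln (Gamma (real D)) - a * ln (real D)) sequentially"
  proof -
    obtain N :: nat where N: "real N > -a" using reals_Archimedean2 by blast
    show ?thesis
    proof (rule eventually_mono[OF eventually_ge_at_top[of N]])
      fix D assume "N \<le> D"
      hence pos: "real D + a > 0" using N by linarith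
      have nz: "real D + a \<notin> \<int>\<^sub>\<le>\<^sub>0" using pos by (auto elim!: nonpos_Ints_cases)
      have "Gamma (real D + (a+1)) = (real D + a) * Gamma (real D + a)"
        using Gamma_plus1[OF nz] by (simp add: add.assoc)
      hence "ln (Gamma (real D + (a+1))) = ln (real D + a) + ln (Gamma (real D + a))"
      proof -
        have gp: "Gamma (real D + a) > 0" using pos by (rule Gamma_real_pos)
        show ?thesis unfolding \<open>Gamma (real D + (a+1)) = _\<close> by (rule ln_mult_pos[OF pos gp])
      qed
      thus "(ln (Gamma (real D + (a+1))) - ln (Gamma (real D)) - (a+1) * ln (real D)) - (ln (real D + a) - ln (real D))
         = ln (Gamma (real D + a)) - ln (Gamma (real D)) - a * ln (real D)" by (simp add: algebra_simps)
    qed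
  qed
  ultimately show ?thesis by (simp add: Lim_transform_eventually)
qed

lemma gamma_ratio:
  fixes a :: real
  shows "(\<lambda>D::nat. ln (Gamma (real D + a)) - ln (Gamma (real D)) - a * ln (real D)) \<longlonglongrightarrow> 0"
proof -
  obtain K :: nat where K: "real K > -a" using reals_Archimedean2 by blast
  have "(\<lambda>D::nat. ln (Gamma (real D + (a + real (K - j)))) - ln (Gamma (real D)) - (a + real (K - j)) * ln (real D)) \<longlonglongrightarrow> 0"
    if "j \<le> K" for j
    using that
  proof (induction j)
    case 0 thus ?case using K by (intro gamma_ratio_pos) simp
  next
    case (Suc j)
    have "a + real (K - j) = (a + real (K - Suc j)) + 1" using Suc.prems by simp
    with Suc show ?case using gamma_ratio_step[of "a + real (K - Suc j)"] by simp
  qed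
  from this[of K] show ?thesis by simp
qed

lemma gamma_shift_ratio_lim:
  fixes c0 q :: real assumes q: "q > 0"
  shows "(\<lambda>D::nat. Gamma (real D + c0 + real i + 1) / Gamma (real D + c0 + 1) * (1/(q*real D))^i) \<longlonglongrightarrow> (1/q)^i"
proof -
  have fac: "(\<lambda>D::nat. (real D + c0 + 1 + real j)/(q*real D)) \<longlonglongrightarrow> 1/q" for j :: nat
  proof -
    have "(\<lambda>D::nat. (real D + c0 + 1 + real j)/real D) \<longlonglongrightarrow> 1" by real_asymp
    from tendsto_divide[OF this tendsto_const[of q]] q show ?thesis by (simp add: field_simps)
  qed
  have lim: "(\<lambda>D::nat. \<Prod>j\<in>{0..<i}. (real D + c0 + 1 + real j)/(q*real D)) \<longlonglongrightarrow> (\<Prod>j\<in>{0..<i}. 1/q)"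
    by (intro tendsto_prod fac)
  obtain N :: nat where N: "real N > - c0 - 1" using reals_Archimedean2 by blast
  have ev: "eventually (\<lambda>D::nat. (\<Prod>j\<in>{0..<i}. (real D + c0 + 1 + real j)/(q*real D)) =
       Gamma (real D + c0 + real i + 1) / Gamma (real D + c0 + 1) * (1/(q*real D))^i) sequentially"
  proof (rule eventually_mono[OF eventually_ge_at_top[of "Suc N"]])
    fix D :: nat assume D: "Suc N \<le> D"
    hence pos: "real D + c0 + 1 > 0" using N by linarith
    have nz: "real D + c0 + 1 \<notin> \<int>\<^sub>\<le>\<^sub>0" using pos by (auto elim!: nonpos_Ints_cases)
    have "Gamma (real D + c0 + real i + 1) / Gamma (real D + c0 + 1) = pochhammer (real D + c0 + 1) i"
      using pochhammer_Gamma[OF nz, of i] by (simp add: add_ac)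
    also have "\<dots> = (\<Prod>j\<in>{0..<i}. real D + c0 + 1 + real j)" by (simp add: pochhammer_prod)
    finally show "(\<Prod>j\<in>{0..<i}. (real D + c0 + 1 + real j)/(q*real D)) =
       Gamma (real D + c0 + real i + 1) / Gamma (real D + c0 + 1) * (1/(q*real D))^i"
      by (simp add: prod_dividef power_one_over)
  qed
  show ?thesis using Lim_transform_eventually[OF lim ev] by simp
qed

lemma poly_moment_lim:
  fixes c0 q :: real and p :: "real poly" assumes q: "q > 0"
  shows "(\<lambda>D::nat. (\<Sum>i\<le>degree p. coeff p i * (1/(q*real D))^i * Gamma (real D + c0 + real i + 1)) / Gamma (real D + c0 + 1)) \<longlonglongrightarrow> poly p (1/q)"
proof -
  have "(\<lambda>D::nat. \<Sum>i\<le>degree p. coeff p i * (Gamma (real D + c0 + real i + 1) / Gamma (real D + c0 + 1) * (1/(q*real D))^i)) \<longlonglongrightarrow> (\<Sum>i\<le>degree p. coeff p i * (1/q)^i)"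
    by (intro tendsto_sum tendsto_mult tendsto_const gamma_shift_ratio_lim q)
  moreover have "(\<Sum>i\<le>degree p. coeff p i * (1/q)^i) = poly p (1/q)" by (simp add: poly_altdef)
  moreover have "(\<Sum>i\<le>degree p. coeff p i * (Gamma (real D + c0 + real i + 1) / Gamma (real D + c0 + 1) * (1/(q*real D))^i))
      = (\<Sum>i\<le>degree p. coeff p i * (1/(q*real D))^i * Gamma (real D + c0 + real i + 1)) / Gamma (real D + c0 + 1)" for D :: nat
    by (simp add: sum_divide_distrib mult_ac)
  ultimately show ?thesis by simp
qed

lemma pow_le_1plus:
  fixes u :: real assumes "0 \<le> u" "i \<le> k" shows "u^i \<le> (1+u)^k"
proof -
  have "u^i \<le> (1+u)^i" using assms by (intro power_mono) auto
  also have "\<dots> \<le> (1+u)^k" using assms by (intro power_increasing) auto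
  finally show ?thesis .
qed

lemma sum_pow_bound:
  fixes u :: real assumes "0 \<le> u"
  shows "\<bar>\<Sum>i\<le>k. a i * u^i\<bar> \<le> (\<Sum>i\<le>k. \<bar>a i\<bar>) * (1+u)^k"
proof -
  have "\<bar>\<Sum>i\<le>k. a i * u^i\<bar> \<le> (\<Sum>i\<le>k. \<bar>a i * u^i\<bar>)" by (rule sum_abs)
  also have "\<dots> \<le> (\<Sum>i\<le>k. \<bar>a i\<bar> * (1+u)^k)"
    using assms pow_le_1plus[OF assms] by (intro sum_mono) (auto simp: abs_mult intro!: mult_left_mono)
  also have "\<dots> = (\<Sum>i\<le>k. \<bar>a i\<bar>) * (1+u)^k" by (simp add: sum_distrib_right)
  finally show ?thesis .
qed

lemma phi_bound:
  fixes x u M q :: real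
  assumes "0 \<le> u" "\<bar>x\<bar> \<le> M * (1+u)^k" "0 < M" "q > 0" "2 * real k * q \<le> real N"
  shows "(x^2) powr q \<le> M powr (2*q) * (1+u)^N"
proof -
  have "\<bar>x\<bar>^2 \<le> (M * (1+u)^k)^2"
    using assms(2) by (intro power_mono) auto
  hence "x^2 \<le> (M * (1+u)^k)^2" by simp
  hence "(x^2) powr q \<le> ((M * (1+u)^k)^2) powr q" using assms by (intro powr_mono2) auto
  also have "((M * (1+u)^k)^2) powr q = M powr (2*q) * (1+u) powr (2*real k*q)"
  proof -
    have e1: "M^2 = M powr 2" using assms(3) by (simp add: powr_numeral)
    have e2: "(1+u)^(2*k) = (1+u) powr (real (2*k))" using assms(1) by (subst powr_realpow) auto
    have "(M * (1+u)^k)^2 = M powr 2 * (1+u) powr (real (2*k))"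
      unfolding e1[symmetric] e2[symmetric] by (simp add: power_mult_distrib power_mult power_mult_distrib[symmetric] flip: power_mult) (simp add: power_mult[symmetric] mult.commute)
    hence "((M * (1+u)^k)^2) powr q = (M powr 2) powr q * ((1+u) powr (real (2*k))) powr q"
      by (simp only: powr_mult)
    also have "\<dots> = M powr (2*q) * (1+u) powr (2*real k*q)"
      by (simp only: powr_powr) (simp add: mult_ac)
    finally show ?thesis .
  qed
  also have "(1+u) powr (2*real k*q) \<le> (1+u) powr (real N)" using assms by (intro powr_mono) auto
  also have "(1+u) powr (real N) = (1+u)^N" using assms by (simp add: powr_realpow)
  finally show ?thesis using assms by (simp add: mult_left_mono)
qed

lemma laplace_conv:
  fixes q c0 :: real and k :: nat and b :: "nat \<Rightarrow> nat \<Rightarrow> real" and \<beta> :: "nat \<Rightarrow> real"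
  assumes q: "q > 0" and c0: "c0 \<ge> -1"
    and bconv: "\<And>i. i \<le> k \<Longrightarrow> (\<lambda>D. b D i) \<longlonglongrightarrow> \<beta> i"
    and xs0: "(\<Sum>i\<le>k. \<beta> i * (1/q)^i) \<noteq> 0"
  shows "(\<lambda>D::nat. lebesgue_integral lborel (\<lambda>s. wfun (real D + c0) s * (((\<Sum>i\<le>k. b D i * ((1/(q*real D)) * s)^i))^2) powr q) / Gamma (real D + c0 + 1))
          \<longlonglongrightarrow> ((\<Sum>i\<le>k. \<beta> i * (1/q)^i)^2) powr q"
proof -
  define \<phi> where "\<phi> x = (x^2) powr q" for x :: real
  define xs where "xs = (\<Sum>i\<le>k. \<beta> i * (1/q)^i)"
  define \<phi>s where "\<phi>s = \<phi> xs"
  define Qb where "Qb u = (\<Sum>i\<le>k. \<beta> i * u^i)" for u :: real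
  define QD where "QD D u = (\<Sum>i\<le>k. b D i * u^i)" for D u
  define N where "N = nat \<lceil>2 * real k * q\<rceil>"
  define M where "M = (\<Sum>i\<le>k. \<bar>\<beta> i\<bar>) + 1"
  define p :: "real poly" where "p = [:-1/q, 1:]^2 * [:1, 1:]^N"
  define c where "c D = 1/(q*real D)" for D :: nat
  have N: "2 * real k * q \<le> real N" unfolding N_def by linarith
  have Mpos: "M > 0" unfolding M_def by (simp add: add_nonneg_pos sum_nonneg)
  have polyp: "poly p u = (u - 1/q)^2 * (1+u)^N" for u
    by (simp add: p_def power2_eq_square algebra_simps)
  have polyp_nn: "poly p u \<ge> 0" if "u \<ge> 0" for u using that unfolding polyp by simp
  have xs0': "xs \<noteq> 0" using xs0 unfolding xs_def .
  have \<phi>s_pos: "\<phi>s > 0" using xs0' unfolding \<phi>s_def \<phi>_def by simp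
  have \<phi>_nn: "\<phi> x \<ge> 0" for x unfolding \<phi>_def by simp
  have Qbxs: "Qb (1/q) = xs" unfolding Qb_def xs_def ..
  have "(\<lambda>D. lebesgue_integral lborel (\<lambda>s. wfun (real D + c0) s * \<phi> (QD D (c D * s))) / Gamma (real D + c0 + 1)) \<longlonglongrightarrow> \<phi>s"
  proof (rule tendstoI)
    fix \<epsilon> :: real assume \<epsilon>: "\<epsilon> > 0"
    have "continuous (at xs) \<phi>" unfolding \<phi>_def using xs0' by (intro continuous_intros) auto
    then obtain \<rho> where \<rho>: "\<rho> > 0" and h\<rho>: "\<And>x. \<bar>x - xs\<bar> < \<rho> \<Longrightarrow> \<bar>\<phi> x - \<phi>s\<bar> < \<epsilon>/2"
      unfolding continuous_at_eps_delta dist_real_def \<phi>s_def using \<epsilon> by (meson half_gt_zero)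
    have "continuous (at (1/q)) Qb" unfolding Qb_def by (intro continuous_intros)
    then obtain \<eta>0 where \<eta>0: "\<eta>0 > 0" and h\<eta>: "\<And>u. \<bar>u - 1/q\<bar> < \<eta>0 \<Longrightarrow> \<bar>Qb u - xs\<bar> < \<rho>/2"
      unfolding continuous_at_eps_delta dist_real_def Qbxs[symmetric] using \<rho> by (meson half_gt_zero)
    define \<eta> where "\<eta> = min \<eta>0 1"
    have \<eta>: "\<eta> > 0" "\<eta> \<le> \<eta>0" "\<eta> \<le> 1" using \<eta>0 by (auto simp: \<eta>_def)
    define C where "C = (M powr (2*q) + \<phi>s) / \<eta>^2"
    have C: "C \<ge> 0" unfolding C_def using \<phi>s_pos by simp
    define B where "B = (2 + 1/q)^k"
    have B: "B > 0" unfolding B_def using q by (intro zero_less_power) (simp add: add_pos_nonneg)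
    have lim1: "(\<lambda>D. \<Sum>i\<le>k. \<bar>b D i - \<beta> i\<bar>) \<longlonglongrightarrow> (\<Sum>i\<le>k. \<bar>\<beta> i - \<beta> i\<bar>)"
      by (intro tendsto_sum tendsto_rabs tendsto_diff bconv tendsto_const) auto
    have ev1: "eventually (\<lambda>D. (\<Sum>i\<le>k. \<bar>b D i - \<beta> i\<bar>) < \<rho>/(2*B)) sequentially"
      using order_tendstoD(2)[OF lim1, of "\<rho>/(2*B)"] \<rho> B by simp
    have lim2: "(\<lambda>D. \<Sum>i\<le>k. \<bar>b D i\<bar>) \<longlonglongrightarrow> (\<Sum>i\<le>k. \<bar>\<beta> i\<bar>)"
      by (intro tendsto_sum tendsto_rabs bconv) auto
    have ev2: "eventually (\<lambda>D. (\<Sum>i\<le>k. \<bar>b D i\<bar>) < M) sequentially"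
      using order_tendstoD(2)[OF lim2, of M] unfolding M_def by simp
    have limp: "(\<lambda>D. lebesgue_integral lborel (\<lambda>s. wfun (real D + c0) s * poly p (c D * s)) / Gamma (real D + c0 + 1)) \<longlonglongrightarrow> 0"
    proof -
      have "(\<lambda>D::nat. (\<Sum>i\<le>degree p. coeff p i * (1/(q*real D))^i * Gamma (real D + c0 + real i + 1)) / Gamma (real D + c0 + 1)) \<longlonglongrightarrow> poly p (1/q)"
        by (rule poly_moment_lim[OF q])
      moreover have "poly p (1/q) = 0" unfolding polyp by simp
      moreover have "eventually (\<lambda>D::nat. (\<Sum>i\<le>degree p. coeff p i * (1/(q*real D))^i * Gamma (real D + c0 + real i + 1)) / Gamma (real D + c0 + 1)
          = lebesgue_integral lborel (\<lambda>s. wfun (real D + c0) s * poly p (c D * s)) / Gamma (real D + c0 + 1)) sequentially"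
      proof (rule eventually_mono[OF eventually_ge_at_top[of "1::nat"]])
        fix D :: nat assume "1 \<le> D"
        hence m: "real D + c0 > -1" using c0 by simp
        show "(\<Sum>i\<le>degree p. coeff p i * (1/(q*real D))^i * Gamma (real D + c0 + real i + 1)) / Gamma (real D + c0 + 1)
          = lebesgue_integral lborel (\<lambda>s. wfun (real D + c0) s * poly p (c D * s)) / Gamma (real D + c0 + 1)"
          unfolding wfun_poly(2)[OF m] c_def ..
      qed
      ultimately show ?thesis using Lim_transform_eventually by fastforce
    qed
    have ev4: "eventually (\<lambda>D. C * (lebesgue_integral lborel (\<lambda>s. wfun (real D + c0) s * poly p (c D * s)) / Gamma (real D + c0 + 1)) < \<epsilon>/2) sequentially"
      using order_tendstoD(2)[OF tendsto_mult[OF tendsto_const[of C] limp], of "\<epsilon>/2"] \<epsilon> by simp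
    show "eventually (\<lambda>D. dist (lebesgue_integral lborel (\<lambda>s. wfun (real D + c0) s * \<phi> (QD D (c D * s))) / Gamma (real D + c0 + 1)) \<phi>s < \<epsilon>) sequentially"
      using ev1 ev2 ev4 eventually_ge_at_top[of "1::nat"]
    proof eventually_elim
      case (elim D)
      define m where "m = real D + c0"
      have m: "m > -1" using elim(4) c0 unfolding m_def by simp
      have G: "Gamma (m + 1) > 0" using m by (intro Gamma_real_pos) simp
      have cpos: "c D > 0" unfolding c_def using elim(4) q by simp
      have key: "\<bar>\<phi> (QD D u) - \<phi>s\<bar> \<le> \<epsilon>/2 + C * poly p u" if u: "u \<ge> 0" for u
      proof -
        have b1: "\<bar>QD D u\<bar> \<le> M * (1+u)^k"
        proof -
          have "\<bar>QD D u\<bar> \<le> (\<Sum>i\<le>k. \<bar>b D i\<bar>) * (1+u)^k" unfolding QD_def by (rule sum_pow_bound[OF u])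
          also have "\<dots> \<le> M * (1+u)^k" using elim(2) u by (intro mult_right_mono) auto
          finally show ?thesis .
        qed
        have b2: "\<phi> (QD D u) \<le> M powr (2*q) * (1+u)^N"
          unfolding \<phi>_def by (rule phi_bound[OF u b1 Mpos q N])
        show ?thesis
        proof (cases "\<bar>u - 1/q\<bar> < \<eta>")
          case True
          have "1 + u \<le> 2 + 1/q" using True \<eta> by linarith
          hence pw: "(1+u)^k \<le> B" unfolding B_def using u by (intro power_mono) auto
          have "\<bar>QD D u - Qb u\<bar> = \<bar>\<Sum>i\<le>k. (b D i - \<beta> i) * u^i\<bar>"
            unfolding QD_def Qb_def by (simp add: sum_subtractf algebra_simps)
          also have "\<dots> \<le> (\<Sum>i\<le>k. \<bar>b D i - \<beta> i\<bar>) * (1+u)^k" by (rule sum_pow_bound[OF u])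
          also have "\<dots> \<le> (\<Sum>i\<le>k. \<bar>b D i - \<beta> i\<bar>) * B" using pw by (intro mult_left_mono) auto
          also have "\<dots> < \<rho>/(2*B) * B" using elim(1) B by (intro mult_strict_right_mono) auto
          also have "\<dots> = \<rho>/2" using B by simp
          finally have d1: "\<bar>QD D u - Qb u\<bar> < \<rho>/2" .
          have d2: "\<bar>Qb u - xs\<bar> < \<rho>/2" using h\<eta> True \<eta> by simp
          have "\<bar>QD D u - xs\<bar> < \<rho>" using d1 d2 by linarith
          hence "\<bar>\<phi> (QD D u) - \<phi>s\<bar> < \<epsilon>/2" by (rule h\<rho>)
          moreover have "C * poly p u \<ge> 0" using C polyp_nn[OF u] by simp
          ultimately show ?thesis by linarith
        next
          case False
          have "\<eta>^2 \<le> (u - 1/q)^2" using False \<eta> by (metis abs_le_square_iff less_eq_real_def not_less abs_of_pos)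
          have one: "1 \<le> (1+u)^N" using u by simp
          have "\<bar>\<phi> (QD D u) - \<phi>s\<bar> \<le> \<phi> (QD D u) + \<phi>s" unfolding abs_le_iff using \<phi>_nn[of "QD D u"] \<phi>s_pos by linarith
          also have "\<dots> \<le> M powr (2*q) * (1+u)^N + \<phi>s * (1+u)^N"
            using b2 one \<phi>s_pos by (intro add_mono) auto
          also have "\<dots> = C * \<eta>^2 * (1+u)^N" unfolding C_def using \<eta>(1) by (simp add: field_simps)
          also have "\<dots> \<le> C * (u - 1/q)^2 * (1+u)^N"
            using C \<open>\<eta>^2 \<le> (u - 1/q)^2\<close> u by (intro mult_right_mono mult_left_mono) auto
          also have "\<dots> = C * poly p u" unfolding polyp by simp
          finally show ?thesis using \<epsilon> by linarith
        qed
      qed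
      have I0: "integrable lborel (\<lambda>s. wfun m s)" "lebesgue_integral lborel (\<lambda>s. wfun m s) = Gamma (m + 1)"
        using wfun_mom[OF m, of 0] by simp_all
      have Ip: "integrable lborel (\<lambda>s. wfun m s * poly p (c D * s))" by (rule wfun_poly(1)[OF m])
      define p2 :: "real poly" where "p2 = [:1, 1:]^N"
      have polyp2: "poly p2 u = (1+u)^N" for u by (simp add: p2_def)
      have Ip2: "integrable lborel (\<lambda>s. M powr (2*q) * (wfun m s * poly p2 (c D * s)))"
        by (intro Bochner_Integration.integrable_mult_right wfun_poly(1)[OF m])
      have meas: "(\<lambda>s. wfun m s * \<phi> (QD D (c D * s))) \<in> borel_measurable lborel"
        unfolding \<phi>_def QD_def by measurable
      have If: "integrable lborel (\<lambda>s. wfun m s * \<phi> (QD D (c D * s)))"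
      proof (rule Bochner_Integration.integrable_bound[OF Ip2 meas], rule AE_I2)
        fix s :: real
        show "norm (wfun m s * \<phi> (QD D (c D * s))) \<le> norm (M powr (2*q) * (wfun m s * poly p2 (c D * s)))"
        proof (cases "s > 0")
          case True
          hence u: "c D * s \<ge> 0" using cpos by simp
          have b1: "\<bar>QD D (c D * s)\<bar> \<le> M * (1 + c D * s)^k"
          proof -
            have "\<bar>QD D (c D * s)\<bar> \<le> (\<Sum>i\<le>k. \<bar>b D i\<bar>) * (1 + c D * s)^k" unfolding QD_def by (rule sum_pow_bound[OF u])
            also have "\<dots> \<le> M * (1 + c D * s)^k" using elim(2) u by (intro mult_right_mono) auto
            finally show ?thesis .
          qed
          have "\<phi> (QD D (c D * s)) \<le> M powr (2*q) * (1 + c D * s)^N"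
            unfolding \<phi>_def by (rule phi_bound[OF u b1 Mpos q N])
          thus ?thesis using wfun_nonneg[of m s] \<phi>_nn u
            by (simp add: polyp2 abs_mult mult_left_mono mult.left_commute)
        next
          case False thus ?thesis by (simp add: wfun_def)
        qed
      qed
      define f where "f s = wfun m s * \<phi> (QD D (c D * s)) - \<phi>s * wfun m s" for s
      define g where "g s = \<epsilon>/2 * wfun m s + C * (wfun m s * poly p (c D * s))" for s
      have intf: "integrable lborel f" unfolding f_def using If I0(1) by auto
      have intg: "integrable lborel g" unfolding g_def using Ip I0(1) by auto
      have fg: "\<bar>f s\<bar> \<le> g s" for s
      proof (cases "s > 0")
        case True
        hence u: "c D * s \<ge> 0" using cpos by simp
        have e: "f s = wfun m s * (\<phi> (QD D (c D * s)) - \<phi>s)" unfolding f_def by (simp add: algebra_simps)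
        have "\<bar>f s\<bar> = wfun m s * \<bar>\<phi> (QD D (c D * s)) - \<phi>s\<bar>"
          unfolding e using wfun_nonneg[of m s] by (simp add: abs_mult)
        also have "\<dots> \<le> wfun m s * (\<epsilon>/2 + C * poly p (c D * s))"
          using key[OF u] wfun_nonneg[of m s] by (rule mult_left_mono)
        also have "\<dots> = g s" unfolding g_def by (simp add: algebra_simps)
        finally show ?thesis .
      next
        case False thus ?thesis by (simp add: f_def g_def wfun_def)
      qed
      have "\<bar>lebesgue_integral lborel f\<bar> \<le> lebesgue_integral lborel g"
        by (rule integral_abs_bound_integral[OF intf intg fg])
      moreover have "lebesgue_integral lborel f = lebesgue_integral lborel (\<lambda>s. wfun m s * \<phi> (QD D (c D * s))) - \<phi>s * Gamma (m+1)"
        unfolding f_def using If I0 by simp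
      moreover have "lebesgue_integral lborel g = \<epsilon>/2 * Gamma (m+1) + C * lebesgue_integral lborel (\<lambda>s. wfun m s * poly p (c D * s))"
        unfolding g_def using Ip I0 by simp
      ultimately have A: "\<bar>lebesgue_integral lborel (\<lambda>s. wfun m s * \<phi> (QD D (c D * s))) - \<phi>s * Gamma (m+1)\<bar>
          \<le> \<epsilon>/2 * Gamma (m+1) + C * lebesgue_integral lborel (\<lambda>s. wfun m s * poly p (c D * s))" by simp
      define X where "X = lebesgue_integral lborel (\<lambda>s. wfun m s * \<phi> (QD D (c D * s)))"
      define Y where "Y = lebesgue_integral lborel (\<lambda>s. wfun m s * poly p (c D * s))"
      define \<Gamma> where "\<Gamma> = Gamma (m+1)"
      have A': "\<bar>X - \<phi>s * \<Gamma>\<bar> \<le> \<epsilon>/2 * \<Gamma> + C * Y" using A unfolding X_def Y_def \<Gamma>_def .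
      have G': "\<Gamma> > 0" using G unfolding \<Gamma>_def .
      have eqd: "X/\<Gamma> - \<phi>s = (X - \<phi>s*\<Gamma>)/\<Gamma>" using G' by (simp add: field_simps)
      have "\<bar>X/\<Gamma> - \<phi>s\<bar> = \<bar>X - \<phi>s*\<Gamma>\<bar>/\<Gamma>" unfolding eqd using G' by simp
      also have "\<dots> \<le> (\<epsilon>/2 * \<Gamma> + C * Y)/\<Gamma>" using A' G' by (intro divide_right_mono) auto
      also have "\<dots> = \<epsilon>/2 + C * (Y/\<Gamma>)" using G' by (simp add: field_simps)
      finally have "\<bar>lebesgue_integral lborel (\<lambda>s. wfun m s * \<phi> (QD D (c D * s))) / Gamma (m+1) - \<phi>s\<bar>
          \<le> \<epsilon>/2 + C * (lebesgue_integral lborel (\<lambda>s. wfun m s * poly p (c D * s)) / Gamma (m+1))"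
        unfolding X_def Y_def \<Gamma>_def .
      also have "\<dots> < \<epsilon>" using elim(3) unfolding m_def by linarith
      finally show ?case unfolding dist_real_def m_def by (simp add: add_ac)
    qed
  qed
  thus ?thesis unfolding \<phi>_def QD_def \<phi>s_def xs_def c_def .
qed

definition lagc :: "nat \<Rightarrow> real \<Rightarrow> nat \<Rightarrow> real" where
  "lagc k \<alpha> i = (-1)^i * Gamma (real k + \<alpha> + 1) / (Gamma (real i + \<alpha> + 1) * fact (k - i) * fact i)"

lemma laguerre_lagc: "laguerre k \<alpha> x = (\<Sum>i\<le>k. lagc k \<alpha> i * x^i)"
  unfolding laguerre_def lagc_def ..

lemma pointwise_rewrite:
  fixes Z q x :: real and n l D :: nat
  assumes Z: "Z > 0" and n: "n \<ge> 1" and q: "q > 0" and D: "D \<ge> 2" and x: "x > 0"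
  defines "k \<equiv> n - l - 1" and "\<alpha> \<equiv> 2*real l + real D - 2" and "lam \<equiv> hyd_lambda Z D n" and "eta \<equiv> hyd_eta D n"
  shows "(hyd_rho Z D n l (lam/q * x)) powr q * (lam/q * x)^(D-1) =
     ((lam powr (-real D)/(2*eta) * (fact k / Gamma (real k + \<alpha> + 1))) powr q * q powr (-(2*real l*q)) * (lam/q)^(D-1)) * real D powr (2*real k*q) *
     (wfun (real D + (2*real l*q - 1)) x * (((\<Sum>i\<le>k. lagc k \<alpha> i * real D^i / real D^k * ((1/(q*real D)) * x)^i))^2) powr q)"
proof -
  have eta: "eta > 0"
  proof -
    have "real n \<ge> 1" "real D \<ge> 2" using n D by auto
    hence "2*real n + real D - 3 > 0" by simp
    thus ?thesis unfolding eta_def hyd_eta_def by (simp add: field_simps)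
  qed
  have lam: "lam > 0" unfolding lam_def hyd_lambda_def using eta Z by (simp add: eta_def)
  have Gp: "Gamma (real k + \<alpha> + 1) > 0" unfolding \<alpha>_def using D by (intro Gamma_real_pos) simp
  define t where "t = x / q"
  have t: "t > 0" unfolding t_def using x q by simp
  have at: "lam/q * x / lam = t" unfolding t_def using lam q by simp
  define Bk where "Bk = fact k / Gamma (real k + \<alpha> + 1)"
  have Bk: "Bk > 0" unfolding Bk_def using Gp by simp
  define Lg where "Lg = laguerre k \<alpha> t"
  define A' where "A' = lam powr (-real D)/(2*eta) * Bk"
  have hL: "2 * hyd_L D l + 1 = \<alpha>" unfolding hyd_L_def \<alpha>_def by (simp add: field_simps)
  have hexp: "\<alpha> - (real D - 2) = 2 * real l" unfolding \<alpha>_def by simp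
  have rho: "hyd_rho Z D n l (lam/q * x) = A' * t powr (2 * real l) * exp (-t) * Lg^2"
  proof -
    have "hyd_rho Z D n l (lam/q * x) = lam powr (-real D)/(2*eta) * t powr (2 * real l) * exp (-t) * (laguerre_on k \<alpha> t)^2"
      unfolding hyd_rho_def Let_def lam_def[symmetric] eta_def[symmetric] hL hexp at k_def ..
    also have "(laguerre_on k \<alpha> t)^2 = Bk * Lg^2"
      unfolding laguerre_on_def Lg_def Bk_def using Gp by (simp add: power_mult_distrib)
    finally show ?thesis unfolding A'_def by (simp add: mult_ac)
  qed
  have p1: "(hyd_rho Z D n l (lam/q * x)) powr q = A' powr q * t powr (2 * real l * q) * exp (-x) * (Lg^2) powr q"
  proof -
    have "(hyd_rho Z D n l (lam/q * x)) powr q = A' powr q * (t powr (2 * real l)) powr q * exp (-t) powr q * (Lg^2) powr q"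
      unfolding rho by (simp only: powr_mult)
    also have "exp (-t) powr q = exp (-x)" unfolding exp_powr_real t_def using q by simp
    also have "(t powr (2 * real l)) powr q = t powr (2 * real l * q)" by (simp add: powr_powr)
    finally show ?thesis .
  qed
  have p2: "t powr (2 * real l * q) = x powr (2 * real l * q) * q powr (-(2*real l*q))"
    unfolding t_def powr_divide powr_minus_divide by simp
  have p3: "(lam/q * x)^(D-1) = (lam/q)^(D-1) * x^(D-1)" by (rule power_mult_distrib)
  have p4: "x powr (2 * real l * q) * x^(D-1) = x powr (real D + (2*real l*q - 1))"
  proof -
    have "x^(D-1) = x powr (real (D-1))" using x by (simp add: powr_realpow)
    moreover have "real (D-1) = real D - 1" using D by simp
    ultimately show ?thesis by (simp add: powr_add[symmetric] algebra_simps)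
  qed
  define Q where "Q = (\<Sum>i\<le>k. lagc k \<alpha> i * real D^i / real D^k * ((1/(q*real D)) * x)^i)"
  have p5: "Lg = real D^k * Q"
  proof -
    have Dp: "real D > 0" using D by simp
    have "Lg = (\<Sum>i\<le>k. lagc k \<alpha> i * t^i)" unfolding Lg_def laguerre_lagc ..
    also have "\<dots> = (\<Sum>i\<le>k. real D^k * (lagc k \<alpha> i * real D^i / real D^k * ((1/(q*real D)) * x)^i))"
    proof (rule sum.cong[OF refl])
      fix i
      have "t = real D * ((1/(q*real D)) * x)" unfolding t_def using Dp q by simp
      hence "t^i = real D^i * ((1/(q*real D)) * x)^i" by (simp only: power_mult_distrib)
      thus "lagc k \<alpha> i * t^i = real D^k * (lagc k \<alpha> i * real D^i / real D^k * ((1/(q*real D)) * x)^i)"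
        using Dp by simp
    qed
    also have "\<dots> = real D^k * Q" unfolding Q_def by (simp add: sum_distrib_left)
    finally show ?thesis .
  qed
  have p6: "(Lg^2) powr q = real D powr (2*real k*q) * (Q^2) powr q"
  proof -
    have "Lg^2 = real D^(2*k) * Q^2" unfolding p5 power_mult_distrib by (simp add: power_mult[symmetric] mult.commute[of k])
    hence "(Lg^2) powr q = (real D^(2*k)) powr q * (Q^2) powr q" by (simp only: powr_mult)
    moreover have "(real D^(2*k)) powr q = real D powr (2*real k*q)"
      using D by (simp add: powr_realpow[symmetric] powr_powr)
    ultimately show ?thesis by simp
  qed
  have w: "wfun (real D + (2*real l*q - 1)) x = x powr (real D + (2*real l*q - 1)) * exp (-x)"
    unfolding wfun_def using x by simp
  show ?thesis
    unfolding p1 p2 p3 p6 w Q_def[symmetric] A'_def[symmetric] Bk_def[symmetric] p4[symmetric]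
    by (simp add: mult_ac)
qed

lemma lam_pos:
  assumes "Z > 0" "n \<ge> 1" "D \<ge> 2"
  shows "hyd_eta D n > 0" "hyd_lambda Z D n > 0"
proof -
  have "real n \<ge> 1" "real D \<ge> 2" using assms by auto
  hence "2*real n + real D - 3 > 0" by simp
  thus e: "hyd_eta D n > 0" unfolding hyd_eta_def by (simp add: field_simps)
  thus "hyd_lambda Z D n > 0" unfolding hyd_lambda_def using assms by simp
qed

lemma rho_integral_rewrite:
  fixes Z q :: real and n l D :: nat
  assumes Z: "Z > 0" and n: "n \<ge> 1" and q: "q > 0" and D: "D \<ge> 2"
  defines "k \<equiv> n - l - 1" and "\<alpha> \<equiv> 2*real l + real D - 2" and "lam \<equiv> hyd_lambda Z D n" and "eta \<equiv> hyd_eta D n"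
  shows "(LBINT r:{0<..}. (hyd_rho Z D n l r) powr q * r^(D-1)) =
     (lam/q) * ((lam powr (-real D)/(2*eta) * (fact k / Gamma (real k + \<alpha> + 1))) powr q * q powr (-(2*real l*q)) * (lam/q)^(D-1)) * real D powr (2*real k*q) *
     lebesgue_integral lborel (\<lambda>x. wfun (real D + (2*real l*q - 1)) x * (((\<Sum>i\<le>k. lagc k \<alpha> i * real D^i / real D^k * ((1/(q*real D)) * x)^i))^2) powr q)"
proof -
  define a where "a = lam/q"
  have a: "a > 0" unfolding a_def lam_def using lam_pos[OF Z n D] q by simp
  define g where "g r = (hyd_rho Z D n l r) powr q * r^(D-1)" for r
  define K where "K = ((lam powr (-real D)/(2*eta) * (fact k / Gamma (real k + \<alpha> + 1))) powr q * q powr (-(2*real l*q)) * (lam/q)^(D-1)) * real D powr (2*real k*q)"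
  define F where "F x = wfun (real D + (2*real l*q - 1)) x * (((\<Sum>i\<le>k. lagc k \<alpha> i * real D^i / real D^k * ((1/(q*real D)) * x)^i))^2) powr q" for x
  have pw: "indicator {0<..} (0 + a * x) *\<^sub>R g (0 + a * x) = K * F x" for x
  proof (cases "x > 0")
    case True
    hence "a * x > 0" using a by simp
    moreover have "g (a * x) = K * F x"
      unfolding g_def K_def F_def a_def k_def \<alpha>_def lam_def eta_def
      using pointwise_rewrite[OF Z n q D True, of l] by simp
    ultimately show ?thesis by simp
  next
    case False
    hence "x \<le> 0" by simp
    hence "a * x \<le> 0" using a by (simp add: mult_nonneg_nonpos)
    thus ?thesis using False by (simp add: F_def wfun_def)
  qed
  have "(LBINT r:{0<..}. g r) = lebesgue_integral lborel (\<lambda>r. indicator {0<..} r *\<^sub>R g r)"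
    unfolding set_lebesgue_integral_def ..
  also have "\<dots> = \<bar>a\<bar> *\<^sub>R lebesgue_integral lborel (\<lambda>x. indicator {0<..} (0 + a * x) *\<^sub>R g (0 + a * x))"
    using a by (intro lborel_integral_real_affine) simp
  also have "\<dots> = a * (K * lebesgue_integral lborel F)" unfolding pw using a by simp
  finally show ?thesis unfolding g_def K_def F_def a_def by (simp add: mult_ac)
qed

lemma bco_lim:
  assumes "i \<le> k"
  shows "(\<lambda>D::nat. lagc k (2*real l + real D - 2) i * real D^i / real D^k) \<longlonglongrightarrow> (-1)^i / (fact (k-i) * fact i)"
proof -
  define c0 where "c0 = 2*real l - 2 + real i"
  have lim: "(\<lambda>D::nat. Gamma (real D + c0 + real (k-i) + 1) / Gamma (real D + c0 + 1) * (1/(1*real D))^(k-i)) \<longlonglongrightarrow> (1/1)^(k-i)"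
    by (rule gamma_shift_ratio_lim) simp
  have eq: "lagc k (2*real l + real D - 2) i * real D^i / real D^k =
      (-1)^i / (fact (k-i) * fact i) * (Gamma (real D + c0 + real (k-i) + 1) / Gamma (real D + c0 + 1) * (1/(1*real D))^(k-i))"
    if D: "D \<ge> 1" for D :: nat
  proof -
    have g1: "real k + (2*real l + real D - 2) + 1 = real D + c0 + real (k-i) + 1"
      unfolding c0_def using assms by (simp add: of_nat_diff)
    have g2: "real i + (2*real l + real D - 2) + 1 = real D + c0 + 1" unfolding c0_def by simp
    have pd: "real D^i / real D^k = (1/(1*real D))^(k-i)"
      using D assms by (simp add: power_diff power_one_over field_simps)
    have L: "lagc k (2*real l + real D - 2) i = (-1)^i / (fact (k-i) * fact i) * (Gamma (real D + c0 + real (k-i) + 1) / Gamma (real D + c0 + 1))"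
      unfolding lagc_def g1 g2 by (simp add: field_simps)
    show ?thesis unfolding L by (simp only: times_divide_eq_right[symmetric] pd mult.assoc)
  qed
  have "(\<lambda>D::nat. (-1)^i / (fact (k-i) * fact i) * (Gamma (real D + c0 + real (k-i) + 1) / Gamma (real D + c0 + 1) * (1/(1*real D))^(k-i)))
          \<longlonglongrightarrow> (-1)^i / (fact (k-i) * fact i) * (1/1)^(k-i)"
    by (intro tendsto_mult tendsto_const lim)
  hence "(\<lambda>D::nat. (-1)^i / (fact (k-i) * fact i) * (Gamma (real D + c0 + real (k-i) + 1) / Gamma (real D + c0 + 1) * (1/(1*real D))^(k-i)))
          \<longlonglongrightarrow> (-1)^i / (fact (k-i) * fact i)" by simp
  moreover have "eventually (\<lambda>D. (-1)^i / (fact (k-i) * fact i) * (Gamma (real D + c0 + real (k-i) + 1) / Gamma (real D + c0 + 1) * (1/(1*real D))^(k-i))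
     = lagc k (2*real l + real D - 2) i * real D^i / real D^k) sequentially"
    using eventually_ge_at_top[of "1::nat"] by eventually_elim (simp add: eq)
  ultimately show ?thesis by (rule Lim_transform_eventually)
qed

lemma beta_sum:
  fixes q :: real assumes "q \<noteq> 0"
  shows "(\<Sum>i\<le>k. (-1)^i / (fact (k-i) * fact i) * (1/q)^i) = (1 - 1/q)^k / fact k"
proof -
  have "(1 - 1/q)^k = (-1/q + 1)^k" by simp
  also have "\<dots> = (\<Sum>i\<le>k. of_nat (k choose i) * (-1/q)^i * 1^(k-i))" by (rule binomial_ring)
  also have "\<dots> = (\<Sum>i\<le>k. fact k * ((-1)^i / (fact (k-i) * fact i) * (1/q)^i))"
  proof (rule sum.cong[OF refl])
    fix i assume "i \<in> {..k}"
    hence "i \<le> k" by simp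
    thus "of_nat (k choose i) * (-1/q)^i * 1^(k-i) = fact k * ((-1)^i / (fact (k-i) * fact i) * (1/q)^i)"
      by (simp add: binomial_fact power_minus' power_one_over field_simps)
  qed
  also have "\<dots> = fact k * (\<Sum>i\<le>k. (-1)^i / (fact (k-i) * fact i) * (1/q)^i)" by (simp add: sum_distrib_left)
  finally show ?thesis by simp
qed

lemma final_alg:
  fixes Dr LD Ll LZ Lq L2p Lk Lq1 G1 G2 LE nr lr kr q :: real
  assumes q1: "q \<noteq> 1" and kr: "kr = nr - lr - 1"
  shows "((Ll - LZ - Lq) + q*(-Dr*(Ll - LZ) - Ll + Lk - G1) - 2*lr*q*Lq + (Dr - 1)*(Ll - LZ - Lq) + 2*kr*q*LD + G2 + LE) / (1 - q)
     - (2*Dr*LD + Dr*(Lq/(q-1) - LZ - 1) + (q*(nr - lr - 1/2) - 1/2)/(1-q)*LD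
        + 1/(1-q) * ((1-q)/2*L2p + 2*kr*q*Lq1 - q*Lk + (2*nr-3)*(1-q) - 2*q*(nr-1)*Lq))
   = ((1-q)*(Dr*Ll - Dr*LD - (2*nr-3)) - q*(Ll - LD) - q*(G1 - ((Dr + (nr + lr - 2) - 1/2)*LD - Dr + L2p/2))
      + (G2 - ((Dr + 2*lr*q - 1/2)*LD - Dr + L2p/2)) + (LE - q*(2*kr*(Lq1 - Lq) - 2*Lk))) / (1 - q)"
proof -
  have a: "1 - q \<noteq> 0" using q1 by auto
  define X where "X = (Ll - LZ - Lq) + q*(-Dr*(Ll - LZ) - Ll + Lk - G1) - 2*lr*q*Lq + (Dr - 1)*(Ll - LZ - Lq) + 2*kr*q*LD + G2 + LE"
  define T where "T = (2*Dr*LD + Dr*(Lq/(q-1) - LZ - 1) + (q*(nr - lr - 1/2) - 1/2)/(1-q)*LD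
        + 1/(1-q) * ((1-q)/2*L2p + 2*kr*q*Lq1 - q*Lk + (2*nr-3)*(1-q) - 2*q*(nr-1)*Lq))"
  define T2 where "T2 = 2*(1-q)*Dr*LD - Dr*Lq - (1-q)*Dr*LZ - (1-q)*Dr + (q*(nr - lr - 1/2) - 1/2)*LD
        + ((1-q)/2*L2p + 2*kr*q*Lq1 - q*Lk + (2*nr-3)*(1-q) - 2*q*(nr-1)*Lq)"
  define Y where "Y = (1-q)*(Dr*Ll - Dr*LD - (2*nr-3)) - q*(Ll - LD) - q*(G1 - ((Dr + (nr + lr - 2) - 1/2)*LD - Dr + L2p/2))
      + (G2 - ((Dr + 2*lr*q - 1/2)*LD - Dr + L2p/2)) + (LE - q*(2*kr*(Lq1 - Lq) - 2*Lk))"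
  have t: "(1-q) * T = T2"
  proof -
    have e1: "(1-q) * (Lq/(q-1)) = - Lq" using a by (simp add: field_simps)
    have e2: "(1-q) * ((q*(nr - lr - 1/2) - 1/2)/(1-q)*LD) = (q*(nr - lr - 1/2) - 1/2)*LD" using a by simp
    have e3: "(1-q) * (1/(1-q) * ((1-q)/2*L2p + 2*kr*q*Lq1 - q*Lk + (2*nr-3)*(1-q) - 2*q*(nr-1)*Lq)) =
       ((1-q)/2*L2p + 2*kr*q*Lq1 - q*Lk + (2*nr-3)*(1-q) - 2*q*(nr-1)*Lq)" using a by simp
    have "(1-q) * T = (1-q)*(2*Dr*LD) + Dr*((1-q) * (Lq/(q-1))) - (1-q)*Dr*LZ - (1-q)*Dr
       + (1-q) * ((q*(nr - lr - 1/2) - 1/2)/(1-q)*LD) + (1-q) * (1/(1-q) * ((1-q)/2*L2p + 2*kr*q*Lq1 - q*Lk + (2*nr-3)*(1-q) - 2*q*(nr-1)*Lq))"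
      unfolding T_def by (simp add: algebra_simps)
    also have "\<dots> = T2" unfolding e1 e2 e3 T2_def by (simp add: algebra_simps)
    finally show ?thesis .
  qed
  have xy: "X - T2 = Y" unfolding X_def T2_def Y_def kr by (simp add: algebra_simps) (simp add: field_simps)
  have "X/(1-q) - T = (X - (1-q)*T)/(1-q)" using a by (simp add: field_simps)
  also have "\<dots> = Y/(1-q)" unfolding t xy ..
  finally show ?thesis unfolding X_def T_def Y_def .
qed

lemma stirling_gamma:
  fixes a :: real
  shows "(\<lambda>D::nat. ln (Gamma (real D + a)) - ((real D + a - 1/2) * ln (real D) - real D + ln (2*pi)/2)) \<longlonglongrightarrow> 0"
proof -
  have A: "(\<lambda>D::nat. ln (Gamma (real D + a)) - ln (Gamma (real D)) - a * ln (real D)) \<longlonglongrightarrow> 0" by (rule gamma_ratio)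
  have B: "(\<lambda>D::nat. ln (Gamma (real D + 1)) - ln (Gamma (real D)) - 1 * ln (real D)) \<longlonglongrightarrow> 0" by (rule gamma_ratio)
  have C: "(\<lambda>N. ln (fact N) - ((real N + 1/2) * ln (real N) - real N) - ln (2*pi)/2) \<longlonglongrightarrow> 0"
    using tendsto_diff[OF stirling_ln_fact tendsto_const[of "ln (2*pi)/2"]] by simp
  have S: "(\<lambda>D::nat. (ln (Gamma (real D + a)) - ln (Gamma (real D)) - a * ln (real D))
      - (ln (Gamma (real D + 1)) - ln (Gamma (real D)) - 1 * ln (real D))
      + (ln (fact D) - ((real D + 1/2) * ln (real D) - real D) - ln (2*pi)/2)) \<longlonglongrightarrow> 0"
    using tendsto_add[OF tendsto_diff[OF A B] C] by simp
  have eq: "(ln (Gamma (real D + a)) - ln (Gamma (real D)) - a * ln (real D))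
      - (ln (Gamma (real D + 1)) - ln (Gamma (real D)) - 1 * ln (real D))
      + (ln (fact D) - ((real D + 1/2) * ln (real D) - real D) - ln (2*pi)/2)
      = ln (Gamma (real D + a)) - ((real D + a - 1/2) * ln (real D) - real D + ln (2*pi)/2)" for D :: nat
  proof -
    have "Gamma (real D + 1) = fact D" using Gamma_fact[of D] by (simp add: add.commute)
    thus ?thesis by (simp add: algebra_simps)
  qed
  show ?thesis using S unfolding eq .
qed

theorem mainTheorem2:
  fixes Z q :: real and n l :: nat
  assumes "Z > 0" and "n \<ge> 1" and "l \<le> n - 1" and "q > 0" and "q \<noteq> 1"
  shows "(\<lambda>D::nat. renyi_rad Z D n l q
            - (2 * real D * ln (real D)
               + real D * ln (q powr (1 / (q - 1)) / (4 * Z * exp 1))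
               + (q * (real n - real l - 1/2) - 1/2) / (1 - q) * ln (real D)
               + 1 / (1 - q) * ln (calF n l q)))
         \<longlonglongrightarrow> 0"
proof -
  note Z = assms(1) and n = assms(2) and l = assms(3) and q = assms(4) and q1 = assms(5)
  define k where "k = n - l - 1"
  have kr: "real k = real n - real l - 1" unfolding k_def using n l by (simp add: of_nat_diff)
  define b where "b D i = lagc k (2*real l + real D - 2) i * real D^i / real D^k" for D i
  define \<beta> :: "nat \<Rightarrow> real" where "\<beta> i = (-1)^i / (fact (k-i) * fact i)" for i
  define xs where "xs = (\<Sum>i\<le>k. \<beta> i * (1/q)^i)"
  have xs_val: "xs = (1 - 1/q)^k / fact k" unfolding xs_def \<beta>_def using beta_sum[of q k] q by simp
  have q1': "1 - 1/q \<noteq> 0" using q q1 by (simp add: field_simps)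
  have xs0: "xs \<noteq> 0" unfolding xs_val using q1' q1 q by simp
  define E where "E D = lebesgue_integral lborel (\<lambda>s. wfun (real D + (2*real l*q - 1)) s * (((\<Sum>i\<le>k. b D i * ((1/(q*real D)) * s)^i))^2) powr q) / Gamma (real D + (2*real l*q - 1) + 1)" for D :: nat
  have Elim: "E \<longlonglongrightarrow> (xs^2) powr q"
    unfolding E_def xs_def
  proof (rule laplace_conv[OF q])
    show "- 1 \<le> 2 * real l * q - 1" using q by simp
    show "\<And>i. i \<le> k \<Longrightarrow> (\<lambda>D. b D i) \<longlonglongrightarrow> \<beta> i" unfolding b_def \<beta>_def by (rule bco_lim)
    show "(\<Sum>i\<le>k. \<beta> i * (1 / q) ^ i) \<noteq> 0" using xs0 unfolding xs_def .
  qed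
  define \<phi>s where "\<phi>s = (xs^2) powr q"
  have \<phi>s: "\<phi>s > 0" unfolding \<phi>s_def using xs0 by simp
  have lnE: "(\<lambda>D. ln (E D)) \<longlonglongrightarrow> ln \<phi>s" using tendsto_ln[OF Elim] \<phi>s unfolding \<phi>s_def by simp
  have Epos: "eventually (\<lambda>D. E D > 0) sequentially"
    using order_tendstoD(1)[OF Elim, of 0] \<phi>s unfolding \<phi>s_def by simp
  have ln\<phi>s: "ln \<phi>s = q * (2 * real k * (ln \<bar>q - 1\<bar> - ln q) - 2 * ln (fact k))"
  proof -
    have ax: "\<bar>xs\<bar> = (\<bar>q - 1\<bar>/q)^k / fact k"
    proof -
      have "1 - 1/q = (q - 1)/q" using q by (simp add: field_simps)
      thus ?thesis unfolding xs_val using q by (simp add: abs_mult power_abs abs_divide)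
    qed
    have pos: "\<bar>q - 1\<bar> > 0" using q1 by simp
    have "ln \<phi>s = q * ln (\<bar>xs\<bar>^2)" unfolding \<phi>s_def by simp
    also have "ln (\<bar>xs\<bar>^2) = 2 * ln \<bar>xs\<bar>" by (subst ln_realpow) simp
    also have "ln \<bar>xs\<bar> = real k * (ln \<bar>q - 1\<bar> - ln q) - ln (fact k)"
      unfolding ax using pos q by (simp add: ln_div ln_realpow)
    finally show ?thesis by (simp add: algebra_simps)
  qed
  define Ll where "Ll D = ln (real D + (2*real n - 3))" for D :: nat
  have R1: "(\<lambda>D::nat. real D * Ll D - real D * ln (real D) - (2*real n - 3)) \<longlonglongrightarrow> 0"
    unfolding Ll_def by real_asymp
  have R2: "(\<lambda>D::nat. Ll D - ln (real D)) \<longlonglongrightarrow> 0"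
    unfolding Ll_def by real_asymp
  have S1: "(\<lambda>D::nat. ln (Gamma (real D + (real n + real l - 2))) - ((real D + (real n + real l - 2) - 1/2) * ln (real D) - real D + ln (2*pi)/2)) \<longlonglongrightarrow> 0"
    by (rule stirling_gamma)
  have S2: "(\<lambda>D::nat. ln (Gamma (real D + 2*real l*q)) - ((real D + 2*real l*q - 1/2) * ln (real D) - real D + ln (2*pi)/2)) \<longlonglongrightarrow> 0"
    by (rule stirling_gamma)
  have R3: "(\<lambda>D. ln (E D) - q * (2 * real k * (ln \<bar>q - 1\<bar> - ln q) - 2 * ln (fact k))) \<longlonglongrightarrow> 0"
    using tendsto_diff[OF lnE tendsto_const[of "ln \<phi>s"]] unfolding ln\<phi>s by simp
  have lim: "(\<lambda>D::nat. ((1-q)*(real D * Ll D - real D * ln (real D) - (2*real n - 3)) - q*(Ll D - ln (real D))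
      - q*(ln (Gamma (real D + (real n + real l - 2))) - ((real D + (real n + real l - 2) - 1/2) * ln (real D) - real D + ln (2*pi)/2))
      + (ln (Gamma (real D + 2*real l*q)) - ((real D + 2*real l*q - 1/2) * ln (real D) - real D + ln (2*pi)/2))
      + (ln (E D) - q * (2 * real k * (ln \<bar>q - 1\<bar> - ln q) - 2 * ln (fact k)))) / (1 - q)) \<longlonglongrightarrow> ((1-q)*0 - q*0 - q*0 + 0 + 0)/(1-q)"
    by (intro tendsto_intros R1 R2 S1 S2 R3) (use q1 in simp)
  have ev: "eventually (\<lambda>D::nat. ((1-q)*(real D * Ll D - real D * ln (real D) - (2*real n - 3)) - q*(Ll D - ln (real D))
      - q*(ln (Gamma (real D + (real n + real l - 2))) - ((real D + (real n + real l - 2) - 1/2) * ln (real D) - real D + ln (2*pi)/2))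
      + (ln (Gamma (real D + 2*real l*q)) - ((real D + 2*real l*q - 1/2) * ln (real D) - real D + ln (2*pi)/2))
      + (ln (E D) - q * (2 * real k * (ln \<bar>q - 1\<bar> - ln q) - 2 * ln (fact k)))) / (1 - q)
      = renyi_rad Z D n l q
            - (2 * real D * ln (real D)
               + real D * ln (q powr (1 / (q - 1)) / (4 * Z * exp 1))
               + (q * (real n - real l - 1/2) - 1/2) / (1 - q) * ln (real D)
               + 1 / (1 - q) * ln (calF n l q))) sequentially"
    using Epos eventually_ge_at_top[of "2::nat"]
  proof eventually_elim
    case (elim D)
    note Ep = elim(1) and D = elim(2)
    define lam where "lam = hyd_lambda Z D n"
    define eta where "eta = hyd_eta D n"
    have eta: "eta > 0" and lam: "lam > 0" using lam_pos[OF Z n D] unfolding lam_def eta_def by auto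
    have Dp: "real D > 0" using D by simp
    have two_eta: "2 * eta = real D + (2*real n - 3)" unfolding eta_def hyd_eta_def by (simp add: field_simps)
    have lam_eq0: "lam = (2*eta) / (4 * Z)" unfolding lam_def hyd_lambda_def eta_def[symmetric] by simp
    have lam_eq: "lam = (real D + (2*real n - 3)) / (4 * Z)" unfolding lam_eq0 two_eta ..
    have pL: "real D + (2*real n - 3) > 0" using two_eta eta by simp
    have lnlam: "ln lam = Ll D - ln (4*Z)" unfolding lam_eq Ll_def using pL Z by (simp add: ln_div)
    have ln2eta: "ln (2*eta) = Ll D" unfolding Ll_def two_eta ..
    have lneta: "ln eta = Ll D - ln 2" using ln2eta eta by (simp add: ln_mult)
    define \<alpha> where "\<alpha> = 2*real l + real D - 2"
    have G1a: "real k + \<alpha> + 1 = real D + (real n + real l - 2)" unfolding \<alpha>_def kr by simp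
    have G2a: "real D + (2*real l*q - 1) + 1 = real D + 2*real l*q" by simp
    have G1p: "Gamma (real D + (real n + real l - 2)) > 0" using n D by (intro Gamma_real_pos) simp
    have G2p: "Gamma (real D + 2*real l*q) > 0" using D q by (intro Gamma_real_pos) (simp add: add_pos_nonneg)
    define IntD where "IntD = lebesgue_integral lborel (\<lambda>x. wfun (real D + (2*real l*q - 1)) x * (((\<Sum>i\<le>k. lagc k \<alpha> i * real D^i / real D^k * ((1/(q*real D)) * x)^i))^2) powr q)"
    have IntE: "IntD = E D * Gamma (real D + 2*real l*q)"
      unfolding E_def IntD_def b_def \<alpha>_def G2a using G2p by simp
    define A' where "A' = lam powr (-real D)/(2*eta) * (fact k / Gamma (real D + (real n + real l - 2)))"
    have A'p: "A' > 0" unfolding A'_def using lam eta G1p by simp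
    have I: "(LBINT r:{0<..}. (hyd_rho Z D n l r) powr q * r^(D-1)) =
       (lam/q) * (A' powr q * q powr (-(2*real l*q)) * (lam/q)^(D-1)) * real D powr (2*real k*q) * (E D * Gamma (real D + 2*real l*q))"
      using rho_integral_rewrite[OF Z n q D, of l] unfolding IntE[symmetric] IntD_def A'_def G1a[symmetric]
        lam_def eta_def k_def \<alpha>_def by simp
    have lnA': "ln A' = - real D * (Ll D - ln (4*Z)) - Ll D + ln (fact k) - ln (Gamma (real D + (real n + real l - 2)))"
      unfolding A'_def using lam eta G1p by (simp add: ln_div ln_mult lnlam lneta)
    have lnI: "ln (LBINT r:{0<..}. (hyd_rho Z D n l r) powr q * r^(D-1)) =
       (Ll D - ln (4*Z) - ln q) + q * ln A' - 2*real l*q*ln q + (real D - 1) * (Ll D - ln (4*Z) - ln q)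
        + 2*real k*q*ln (real D) + ln (Gamma (real D + 2*real l*q)) + ln (E D)"
    proof -
      have lq: "ln (lam/q) = Ll D - ln (4*Z) - ln q" using lam q lnlam by (simp add: ln_div)
      have r1: "real (D - 1) = real D - 1" using D by simp
      have lnlam2: "ln lam = Ll D - ln 4 - ln Z" using lnlam Z by (simp add: ln_mult)
      show ?thesis unfolding I using lam q A'p Ep G2p Dp Z
        by (simp add: ln_mult ln_div ln_realpow lnlam2 r1 algebra_simps)
    qed
    have T1: "ln (q powr (1 / (q - 1)) / (4 * Z * exp 1)) = ln q / (q - 1) - ln (4*Z) - 1"
      using q Z by (simp add: ln_div ln_mult)
    have T2: "ln (calF n l q) = (1-q)/2 * ln (2*pi) + 2*real k*q*ln \<bar>q - 1\<bar> - q * ln (fact k) + (2*real n - 3)*(1-q) - 2*q*(real n - 1)*ln q"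
    proof -
      have nl: "n - l = Suc k" unfolding k_def using n l by simp
      have Gk: "Gamma (real (n - l)) = fact k" unfolding nl using Gamma_fact[of k] by (simp add: add.commute)
      have pos: "\<bar>q - 1\<bar> > 0" using q1 by simp
      show ?thesis unfolding calF_def Gk k_def[symmetric] using q pos pi_gt_zero
        by (simp add: ln_div ln_mult algebra_simps)
    qed
    have R: "renyi_rad Z D n l q = ((Ll D - ln (4*Z) - ln q) + q*(-real D*(Ll D - ln (4*Z)) - Ll D + ln (fact k) - ln (Gamma (real D + (real n + real l - 2))))
         - 2*real l*q*ln q + (real D - 1)*(Ll D - ln (4*Z) - ln q) + 2*real k*q*ln (real D) + ln (Gamma (real D + 2*real l*q)) + ln (E D)) / (1 - q)"
      unfolding renyi_rad_def lnI lnA' by simp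
    show ?case unfolding R T1 T2
      by (rule final_alg[OF q1 kr, symmetric])
  qed
  have "(\<lambda>D::nat. renyi_rad Z D n l q
            - (2 * real D * ln (real D)
               + real D * ln (q powr (1 / (q - 1)) / (4 * Z * exp 1))
               + (q * (real n - real l - 1/2) - 1/2) / (1 - q) * ln (real D)
               + 1 / (1 - q) * ln (calF n l q))) \<longlonglongrightarrow> ((1-q)*0 - q*0 - q*0 + 0 + 0)/(1-q)"
    by (rule Lim_transform_eventually[OF lim ev])
  thus ?thesis by simp
qed

end
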